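(* Let $k\ge 1$ and $n\ge 1$ be integers and let $$D_n(k,x)=\left(\binom{i+k-1}{j+k-1}x^k-\binom{i}{j-1}\right)_{i,j=0}^{n-1}.$$ Then $\det D_n(k,x)=x^nF^{(k)}_{(k-1)n}(x)$.
   Context: Binomial coefficients: for integers $m\ge 0$ and $j$, $\binom{m}{j}$ is the usual binomial coefficient, with $\binom{m}{j}=0$ if $j<0$ or $j>m$. For an integer $k\ge1$, the generalized Fibonacci polynomials $F^{(k)}_n(x)\in\mathbb{Z}[x]$ ($n\ge0$) are defined by $F^{(k)}_n(x)=x^n$ for $0\le n<k$ and $F^{(k)}_n(x)=xF^{(k)}_{n-1}(x)+F^{(k)}_{n-k}(x)$ for $n\ge k$. *)

theory Defs
  imports "HOL-Computational_Algebra.Polynomial" "Jordan_Normal_Form.Determinant"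
begin

function genfib :: "nat \<Rightarrow> nat \<Rightarrow> int poly" where
  "genfib k n = (if k = 0 then 0 else if n < k then monom 1 n
                 else pCons 0 (genfib k (n - 1)) + genfib k (n - k))"
  by auto
termination
  by (relation "measure snd") auto

definition binomz :: "nat \<Rightarrow> int \<Rightarrow> int" where
  "binomz m j = (if j < 0 then 0 else int (m choose nat j))"

definition Dmat :: "nat \<Rightarrow> nat \<Rightarrow> int poly mat" where
  "Dmat n k = mat n n (\<lambda>(i, j).
     smult (binomz (i + k - 1) (int j + int k - 1)) (monom 1 k)
     - [: binomz i (int j - 1) :])"

end

theory Submission
  imports Defs
begin

lemma binomz_neg[simp]: "b < 0 \<Longrightarrow> binomz a b = 0" by (simp add: binomz_def)
lemma binomz_big: "b > int a \<Longrightarrow> binomz a b = 0" by (simp add: binomz_def)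
lemma binomz_nat[simp]: "binomz a (int q) = int (a choose q)" by (simp add: binomz_def)

lemma binomz_sym: "binomz a b = binomz a (int a - b)"
proof (cases "b < 0")
  case True thus ?thesis by (simp add: binomz_big)
next
  case False
  show ?thesis
  proof (cases "b > int a")
    case True thus ?thesis by (simp add: binomz_big)
  next
    case F2: False
    then obtain q where q: "b = int q" "q \<le> a" using False by (metis nonneg_int_cases of_nat_le_iff not_less)
    have e: "int a - int q = int (a - q)" using q by simp
    show ?thesis unfolding q(1) e by (simp only: binomz_nat binomial_symmetric[OF q(2)])
  qed
qed

lemma binomz_vand:
  assumes "c \<le> int R"
  shows "(\<Sum>m\<le>R. binomz a (int m - int p) * binomz b (c - int m)) = binomz (a+b) (c - int p)"
proof (cases "c < int p")
  case True
  have z: "binomz a (int m - int p) * binomz b (c - int m) = 0" for m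
  proof (cases "m < p")
    case False thus ?thesis using True by simp
  qed simp
  show ?thesis using True by (simp only: z sum.neutral_const) simp
next
  case False
  define r where "r = nat (c - int p)"
  have c: "c = int p + int r" using False r_def by simp
  let ?g = "\<lambda>m. binomz a (int m - int p) * binomz b (c - int m)"
  have "sum ?g {..R} = sum ?g {p..p+r}"
  proof (rule sum.mono_neutral_right)
    show "{p..p+r} \<subseteq> {..R}" using assms c by auto
    show "\<forall>i\<in>{..R} - {p..p + r}. ?g i = 0" using c by auto
  qed auto
  also have "\<dots> = sum (\<lambda>q. ?g (q + p)) {0..r}"
    using sum.shift_bounds_cl_nat_ivl[of ?g 0 p r] by (simp add: add.commute)
  also have "\<dots> = (\<Sum>q\<le>r. int ((a choose q) * (b choose (r - q))))"
  proof (rule sum.cong)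
    fix q assume "q \<in> {..r}"
    hence "c - int (q + p) = int (r - q)" using c by auto
    thus "?g (q + p) = int ((a choose q) * (b choose (r - q)))" by simp
  qed (auto simp: atLeast0AtMost)
  also have "\<dots> = int (a + b choose r)"
    by (simp only: of_nat_sum[symmetric] vandermonde)
  finally show ?thesis using c by simp
qed

definition fe :: "nat \<Rightarrow> nat \<Rightarrow> nat \<Rightarrow> int poly" where
  "fe k i m = smult (binomz (i + k - 1) (int m + int k - 1)) (monom 1 k) - [: binomz i (int m - 1) :]"

definition uu :: "nat \<Rightarrow> nat \<Rightarrow> int poly" where
  "uu k m = (\<Sum>j\<le>m. monom (binomz ((k-1)*j) (int m - int j)) (k*j))"

lemma uu_ext: assumes "m \<le> R"
  shows "uu k m = (\<Sum>j\<le>R. monom (binomz ((k-1)*j) (int m - int j)) (k*j))"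
  unfolding uu_def
  by (rule sum.mono_neutral_left) (use assms in auto)

lemma fe_mult_monom:
  "fe k i m * monom c d = monom (binomz (i+k-1) (int m + int k - 1) * c) (k + d) - monom (binomz i (int m - 1) * c) d"
  by (simp add: fe_def algebra_simps mult_monom smult_monom flip: monom_0)

lemma key:
  assumes k: "k \<ge> 1"
  shows "(\<Sum>m\<le>Suc i. fe k i m * uu k m) = 0"
proof -
  define R where "R = Suc i"
  define A where "A j = binomz ((k-1)*j + (i+k-1)) (int i - int j)" for j
  define Bt where "Bt j = binomz ((k-1)*j + i) (int i + 1 - int j)" for j
  have "(\<Sum>m\<le>R. fe k i m * uu k m) =
     (\<Sum>m\<le>R. \<Sum>j\<le>R. monom (binomz (i+k-1) (int m + int k - 1) * binomz ((k-1)*j) (int m - int j)) (k + k*j)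
        - monom (binomz i (int m - 1) * binomz ((k-1)*j) (int m - int j)) (k*j))"
    by (rule sum.cong[OF refl], subst uu_ext[of _ R], simp, simp add: sum_distrib_left fe_mult_monom)
  also have "\<dots> = (\<Sum>j\<le>R. \<Sum>m\<le>R. monom (binomz (i+k-1) (int m + int k - 1) * binomz ((k-1)*j) (int m - int j)) (k + k*j)
        - monom (binomz i (int m - 1) * binomz ((k-1)*j) (int m - int j)) (k*j))"
    by (rule sum.swap)
  also have "\<dots> = (\<Sum>j\<le>R. monom (A j) (k + k*j) - monom (Bt j) (k*j))"
  proof (rule sum.cong[OF refl])
    fix j
    have a: "(\<Sum>m\<le>R. binomz (i+k-1) (int m + int k - 1) * binomz ((k-1)*j) (int m - int j)) = A j"
    proof -
      have "(\<Sum>m\<le>R. binomz (i+k-1) (int m + int k - 1) * binomz ((k-1)*j) (int m - int j))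
          = (\<Sum>m\<le>R. binomz ((k-1)*j) (int m - int j) * binomz (i+k-1) (int i - int m))"
        by (rule sum.cong[OF refl], subst binomz_sym, use k in simp)
      also have "\<dots> = A j" unfolding A_def by (rule binomz_vand) (simp add: R_def)
      finally show ?thesis .
    qed
    have b: "(\<Sum>m\<le>R. binomz i (int m - 1) * binomz ((k-1)*j) (int m - int j)) = Bt j"
    proof -
      have "(\<Sum>m\<le>R. binomz i (int m - 1) * binomz ((k-1)*j) (int m - int j))
          = (\<Sum>m\<le>R. binomz ((k-1)*j) (int m - int j) * binomz i (int i + 1 - int m))"
        by (rule sum.cong[OF refl], subst binomz_sym, simp add: algebra_simps)
      also have "\<dots> = Bt j" unfolding Bt_def by (rule binomz_vand) (simp add: R_def)
      finally show ?thesis .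
    qed
    show "(\<Sum>m\<le>R. monom (binomz (i+k-1) (int m + int k - 1) * binomz ((k-1)*j) (int m - int j)) (k + k*j)
        - monom (binomz i (int m - 1) * binomz ((k-1)*j) (int m - int j)) (k*j)) = monom (A j) (k + k*j) - monom (Bt j) (k*j)"
      by (simp only: sum_subtractf a b flip: monom_sum)
  qed
  also have "\<dots> = 0"
  proof -
    have AB: "A j = Bt (Suc j)" for j
    proof -
      have "(k-1)*j + (i+k-1) = (k-1)*Suc j + i" using k by (cases k) (auto simp: algebra_simps)
      thus ?thesis unfolding A_def Bt_def by (simp add: ac_simps)
    qed
    have A0: "A (Suc i) = 0" unfolding A_def by simp
    have B0: "Bt 0 = 0" unfolding Bt_def by (simp add: binomz_big)
    have "(\<Sum>j\<le>R. monom (A j) (k + k*j)) = (\<Sum>j\<le>i. monom (Bt (Suc j)) (k * Suc j))"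
      unfolding R_def by (simp only: sum.atMost_Suc A0 monom_eq_0 add_0_right) (simp add: AB)
    also have "\<dots> = (\<Sum>j\<le>R. monom (Bt j) (k*j))"
      unfolding R_def by (simp only: sum.atMost_Suc_shift B0) simp
    finally show ?thesis by (simp add: sum_subtractf)
  qed
  finally show ?thesis unfolding R_def .
qed

declare genfib.simps[simp del]

lemma gf_coeff:
  assumes k: "k \<ge> 1"
  shows "(\<forall>j. N = a + k*j \<longrightarrow> coeff (genfib k N) a = int (a + j choose j)) \<and>
         ((\<forall>j. N \<noteq> a + k*j) \<longrightarrow> coeff (genfib k N) a = 0)"
proof (induction N arbitrary: a rule: less_induct)
  case (less N)
  show ?case
  proof (cases "N < k")
    case True
    have g: "genfib k N = monom 1 N" using True k by (subst genfib.simps) simp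
    have j0: "j = 0" if "N = a + k*j" for j
    proof (rule ccontr)
      assume "j \<noteq> 0" hence "k*j \<ge> k" by simp
      thus False using that True by linarith
    qed
    show ?thesis
    proof (intro conjI allI impI)
      fix j assume N: "N = a + k*j"
      have "j = 0" using j0 N by blast
      thus "coeff (genfib k N) a = int (a + j choose j)" unfolding g using N by (simp add: coeff_monom)
    next
      assume "\<forall>j. N \<noteq> a + k*j"
      hence "N \<noteq> a" by (metis add.right_neutral mult_0_right)
      thus "coeff (genfib k N) a = 0" by (simp add: g coeff_monom)
    qed
  next
    case False
    have g: "genfib k N = pCons 0 (genfib k (N-1)) + genfib k (N-k)" using False k by (subst genfib.simps) simp
    have IH1: "(\<forall>j. N - 1 = b + k*j \<longrightarrow> coeff (genfib k (N-1)) b = int (b + j choose j)) \<and>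
         ((\<forall>j. N - 1 \<noteq> b + k*j) \<longrightarrow> coeff (genfib k (N-1)) b = 0)" for b
      using less[of "N-1" b] False k by simp
    have IH2: "(\<forall>j. N - k = b + k*j \<longrightarrow> coeff (genfib k (N-k)) b = int (b + j choose j)) \<and>
         ((\<forall>j. N - k \<noteq> b + k*j) \<longrightarrow> coeff (genfib k (N-k)) b = 0)" for b
      using less[of "N-k" b] False k by simp
    show ?thesis
    proof (cases a)
      case 0
      have c: "coeff (genfib k N) a = coeff (genfib k (N-k)) 0" by (simp add: g 0)
      show ?thesis
      proof (intro conjI allI impI)
        fix j assume N: "N = a + k*j"
        then obtain j' where j': "j = Suc j'" using False 0 k by (cases j) auto
        have "N - k = 0 + k*j'" using N j' 0 by simp
        thus "coeff (genfib k N) a = int (a + j choose j)" using IH2[of 0] c 0 j' by simp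
      next
        assume H: "\<forall>j. N \<noteq> a + k*j"
        have "\<forall>j. N - k \<noteq> 0 + k*j"
        proof (intro allI notI)
          fix j assume "N - k = 0 + k*j"
          hence "N = a + k * Suc j" using False 0 by simp
          thus False using H by blast
        qed
        thus "coeff (genfib k N) a = 0" using IH2[of 0] c by simp
      qed
    next
      case (Suc b)
      have c: "coeff (genfib k N) a = coeff (genfib k (N-1)) b + coeff (genfib k (N-k)) a" by (simp add: g Suc)
      show ?thesis
      proof (intro conjI allI impI)
        fix j assume N: "N = a + k*j"
        have c1: "coeff (genfib k (N-1)) b = int (b + j choose j)" using IH1[of b] N Suc by simp
        show "coeff (genfib k N) a = int (a + j choose j)"
        proof (cases j)
          case 0
          have "\<forall>j. N - k \<noteq> a + k*j" using N 0 k False by auto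
          hence "coeff (genfib k (N-k)) a = 0" using IH2[of a] by simp
          thus ?thesis using c c1 0 by simp
        next
          case (Suc j')
          have "N - k = a + k*j'" using N Suc by simp
          hence "coeff (genfib k (N-k)) a = int (a + j' choose j')" using IH2[of a] by simp
          thus ?thesis using c c1 Suc \<open>a = Suc b\<close> by simp
        qed
      next
        assume H: "\<forall>j. N \<noteq> a + k*j"
        have "\<forall>j. N - 1 \<noteq> b + k*j"
        proof (intro allI notI)
          fix j assume "N - 1 = b + k*j"
          hence "N = a + k * j" using False k Suc by simp
          thus False using H by blast
        qed
        hence c1: "coeff (genfib k (N-1)) b = 0" using IH1[of b] by simp
        have "\<forall>j. N - k \<noteq> a + k*j"
        proof (intro allI notI)
          fix j assume "N - k = a + k*j"
          hence "N = a + k * Suc j" using False by simp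
          thus False using H by blast
        qed
        hence "coeff (genfib k (N-k)) a = 0" using IH2[of a] by simp
        thus "coeff (genfib k N) a = 0" using c c1 by simp
      qed
    qed
  qed
qed

lemma uu_genfib:
  assumes k: "k \<ge> 1"
  shows "uu k n = monom 1 n * genfib k ((k-1)*n)"
proof (rule poly_eqI)
  fix d
  have kn: "(k-1)*n + n = k*n" using k by (cases k) auto
  have cu: "coeff (uu k n) d = (\<Sum>j\<le>n. if d = k*j then binomz ((k-1)*j) (int n - int j) else 0)"
    unfolding uu_def coeff_sum by (rule sum.cong) (auto simp: coeff_monom)
  have cr: "coeff (monom 1 n * genfib k ((k-1)*n)) d = (if d < n then 0 else coeff (genfib k ((k-1)*n)) (d - n))"
    by (simp add: coeff_monom_mult)
  show "coeff (uu k n) d = coeff (monom 1 n * genfib k ((k-1)*n)) d"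
  proof (cases "\<exists>j\<le>n. d = k*j")
    case True
    then obtain j where j: "j \<le> n" "d = k*j" by blast
    have kj: "(k-1)*j + j = k*j" using k by (cases k) auto
    have kjn: "k*j \<le> k*n" using j by simp
    have knj: "k*(n-j) = k*n - k*j" by (simp add: diff_mult_distrib2)
    have "coeff (uu k n) d = (\<Sum>x\<le>n. if x = j then binomz ((k-1)*x) (int n - int x) else 0)"
      unfolding cu by (rule sum.cong) (use j k in auto)
    also have "\<dots> = int ((k-1)*j choose (n - j))" using j by (simp add: of_nat_diff[symmetric] del: of_nat_diff)
    finally have L: "coeff (uu k n) d = int ((k-1)*j choose (n - j))" .
    show ?thesis
    proof (cases "d < n")
      case True
      have "(k-1)*j < n - j" using True j kj by linarith
      thus ?thesis using L cr True by simp
    next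
      case False
      have N: "(k-1)*n = (d - n) + k*(n-j)" using False j kj kn kjn knj by linarith
      have "coeff (genfib k ((k-1)*n)) (d - n) = int ((d - n) + (n - j) choose (n - j))"
        using conjunct1[OF gf_coeff[OF k, of "(k-1)*n" "d-n"]] N by blast
      moreover have "(d - n) + (n - j) = (k-1)*j" using False j kj by linarith
      ultimately show ?thesis using L cr False by simp
    qed
  next
    case False
    have "coeff (uu k n) d = 0" unfolding cu by (rule sum.neutral) (use False in auto)
    moreover have "coeff (monom 1 n * genfib k ((k-1)*n)) d = 0"
    proof (cases "d < n")
      case True thus ?thesis using cr by simp
    next
      case dn: False
      have "\<forall>jj. (k-1)*n \<noteq> (d - n) + k*jj"
      proof (intro allI notI)
        fix jj assume E: "(k-1)*n = (d - n) + k*jj"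
        have "k*jj \<le> k*n" using E kn dn by linarith
        hence jjn: "jj \<le> n" using k by simp
        have knj: "k*(n-jj) = k*n - k*jj" by (simp add: diff_mult_distrib2)
        have "d = k*(n-jj)" using E kn dn knj \<open>k*jj \<le> k*n\<close> by linarith
        thus False using False diff_le_self by blast
      qed
      thus ?thesis using cr dn conjunct2[OF gf_coeff[OF k, of "(k-1)*n" "d-n"]] by simp
    qed
    ultimately show ?thesis by simp
  qed
qed



lemma fe_zero: assumes "m > Suc i" shows "fe k i m = 0"
proof -
  have "binomz (i + k - 1) (int m + int k - 1) = 0" using assms by (intro binomz_big) linarith
  moreover have "binomz i (int m - 1) = 0" using assms by (intro binomz_big) linarith
  ultimately show ?thesis unfolding fe_def by simp
qed

lemma fe_sup: assumes "k \<ge> 1" shows "fe k i (Suc i) = -1"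
proof -
  have "binomz (i + k - 1) (int (Suc i) + int k - 1) = 0" using assms by (intro binomz_big) linarith
  moreover have "binomz i (int (Suc i) - 1) = 1" by simp
  ultimately show ?thesis unfolding fe_def by (simp add: pCons_one)
qed

lemma Dmat_carrier: "Dmat n k \<in> carrier_mat n n" unfolding Dmat_def by simp
lemma Dmat_index: "i < n \<Longrightarrow> j < n \<Longrightarrow> Dmat n k $$ (i,j) = fe k i j"
  unfolding Dmat_def fe_def by simp

theorem theorem4:
  fixes k n :: nat
  assumes "k \<ge> 1" and "n \<ge> 1"
  shows "det (Dmat n k) = monom 1 n * genfib k ((k - 1) * n)"
proof -
  note k = assms(1)
  obtain n' where n: "n = Suc n'" using assms(2) by (cases n) auto
  define A where "A = Dmat n k"
  define E :: "int poly mat" where "E = mat n n (\<lambda>(i,j). if j = 0 then uu k i else if i = j then 1 else 0)"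
  have A: "A \<in> carrier_mat n n" unfolding A_def by (rule Dmat_carrier)
  have Ec: "E \<in> carrier_mat n n" unfolding E_def by simp
  have u0: "uu k 0 = 1" unfolding uu_def by (simp add: monom_0 one_pCons binomz_def)
  have "det E = prod_list (diag_mat E)"
    by (rule det_lower_triangular[OF _ Ec]) (auto simp: E_def)
  also have "diag_mat E = map (\<lambda>_. 1) [0..<n]"
    unfolding diag_mat_def using Ec by (auto simp: E_def u0)
  finally have dE: "det E = 1" by (simp add: map_replicate_const)
  define B where "B = A * E"
  have Bc: "B \<in> carrier_mat n n" unfolding B_def using A Ec by simp
  have dB: "det B = det A" unfolding B_def using det_mult[OF A Ec] dE by simp
  have Bidx: "B $$ (i,j) = (\<Sum>l\<in>{0..<n}. fe k i l * E $$ (l, j))" if "i < n" "j < n" for i j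
    unfolding B_def using that A Ec
    by (auto simp: scalar_prod_def A_def Dmat_index intro!: sum.cong)
  have Bj: "B $$ (i, Suc j) = fe k i (Suc j)" if "i < n" "Suc j < n" for i j
  proof -
    have "B $$ (i, Suc j) = (\<Sum>l\<in>{0..<n}. if l = Suc j then fe k i l else 0)"
      unfolding Bidx[OF that] by (rule sum.cong) (use that in \<open>auto simp: E_def\<close>)
    thus ?thesis using that by simp
  qed
  have B0: "B $$ (i, 0) = (\<Sum>l\<in>{0..<n}. fe k i l * uu k l)" if "i < n" for i
  proof -
    have "B $$ (i, 0) = (\<Sum>l\<in>{0..<n}. fe k i l * E $$ (l, 0))" using Bidx[of i 0] that n by simp
    also have "\<dots> = (\<Sum>l\<in>{0..<n}. fe k i l * uu k l)" by (rule sum.cong) (auto simp: E_def)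
    finally show ?thesis .
  qed
  have B0low: "B $$ (i, 0) = 0" if "i < n'" for i
  proof -
    have "(\<Sum>l\<in>{0..<n}. fe k i l * uu k l) = (\<Sum>l\<le>Suc i. fe k i l * uu k l)"
      by (rule sum.mono_neutral_right) (use that n in \<open>auto simp: fe_zero\<close>)
    thus ?thesis using B0[of i] that n key[OF k, of i] by simp
  qed
  have B0last: "B $$ (n', 0) = uu k n"
  proof -
    have "(\<Sum>l\<le>Suc n'. fe k n' l * uu k l) = (\<Sum>l\<in>{0..<n}. fe k n' l * uu k l) + fe k n' n * uu k n"
      using n by (simp add: atLeast0LessThan lessThan_Suc_atMost[symmetric])
    thus ?thesis using B0[of n'] n key[OF k, of n'] fe_sup[OF k, of n'] by simp
  qed
  define M where "M = mat_delete B n' 0"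
  have Mc: "M \<in> carrier_mat n' n'" unfolding M_def using mat_delete_carrier[OF Bc] n by simp
  have Midx: "M $$ (i,j) = fe k i (Suc j)" if "i < n'" "j < n'" for i j
    unfolding M_def mat_delete_def using that Bc n Bj by simp
  have "det M = prod_list (diag_mat M)"
    by (rule det_lower_triangular[OF _ Mc]) (auto simp: Midx fe_zero)
  also have "diag_mat M = map (\<lambda>_. -1) [0..<n']"
    unfolding diag_mat_def using Mc by (auto simp: Midx fe_sup[OF k])
  finally have dM: "det M = (-1)^n'" by (simp add: map_replicate_const)
  have "det B = (\<Sum>i<n. B $$ (i,0) * cofactor B i 0)"
    by (rule laplace_expansion_column[OF Bc]) (use n in simp)
  also have "\<dots> = B $$ (n',0) * cofactor B n' 0"
    unfolding n lessThan_Suc by (simp add: B0low)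
  also have "\<dots> = uu k n"
    unfolding cofactor_def B0last M_def[symmetric] dM by simp
  finally show ?thesis using dB uu_genfib[OF k] unfolding A_def by simp
qed

end
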